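(* Fast-track actions are optimal: let $s_t$ be a state in which the current color $p_t\neq 0$, the next upstream car has color $e_{t,1}=p_t$, and some lane $i$ is completely empty. Then the store action that places this car into lane $i$ (action $a=L+i$) is optimal in $s_t$.
   Context: Paint shop problem with a multi-lane buffer: an upstream sequence of cars with colors in $\{1,\dots,C\}$ is processed in order; the buffer has $L$ lanes, each a first-in-first-out queue of capacity $W$, with $B_{t,i,j}\in\{0,\dots,C\}$ the color at position $j$ of lane $i$ at time $t$ (0 = empty, position $W$ is the front/exit of the lane, new cars enter at the rightmost empty position). $e_{t,1}$ is the color of the next upstream car (0 if the upstream sequence is empty), and $p_t\in\{0,\dots,C\}$ is the color of the last car appended to the downstream sequence (0 initially). Actions: $a\in\{1,\dots,L\}$ retrieves the front car of lane $a$ and appends it to the downstream sequence (setting $p_{t+1}=B_{t,a,W}$); $a\in\{L+1,\dots,2L\}$ stores the next upstream car in lane $a-L$ (leaving $p$ unchanged). Reward: $r(s_t,a)=1$ for a valid retrieval with $B_{t,a,W}=p_t$; $0$ for a valid retrieval with $B_{t,a,W}\neq p_t$; $0$ for a valid store; $-10$ for an invalid action (retrieving from an empty lane, storing into a full lane, or storing when the upstream sequence is empty). The cumulative reward of actions $a_1,\dots,a_n$ from state $s_0$ is $r(s_0,a_1,\dots,a_n)=\sum_{t=0}^{n-1} r(s_t,a_{t+1})$, where $s_{t+1}$ results from applying $a_{t+1}$ in $s_t$. An action $a^*$ is optimal in $s_t$ if $\max_{a_1,\dots,a_n}r(s_t,a^*,a_1,\dots,a_n)\ge r(s_t,a',a'_1,\dots,a'_n)$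 for all actions $a',a'_1,\dots,a'_n$. *)

theory Defs
  imports Main
begin

text \<open>Lane i is stored as a list whose head is the front car (position W); the color
  B_{t,i,j} at position j of lane i is given by function buf below (0 = empty).\<close>

record pstate =
  lanes :: "nat \<Rightarrow> nat list"   \<comment> \<open>lane i (1..L); head = front car at position W\<close>
  upstream :: "nat list"
  prev :: "nat"                  \<comment> \<open>p_t: color of last car appended downstream (0 initially)\<close>

text \<open>B_{t,i,j}: position W is the front, cars are packed towards the front.\<close>
definition buf :: "nat \<Rightarrow> pstate \<Rightarrow> nat \<Rightarrow> nat \<Rightarrow> nat" where
  "buf W s i j = (if 1 \<le> j \<and> j \<le> W \<and> W - j < length (lanes s i)
                   then lanes s i ! (W - j) else 0)"

definition next_up :: "pstate \<Rightarrow> nat" where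
  "next_up s = (case upstream s of [] \<Rightarrow> 0 | c # _ \<Rightarrow> c)"

definition wf_state :: "nat \<Rightarrow> nat \<Rightarrow> nat \<Rightarrow> pstate \<Rightarrow> bool" where
  "wf_state L W C s \<longleftrightarrow> 1 \<le> L \<and> 1 \<le> W \<and> 1 \<le> C \<and>
     (\<forall>i\<in>{1..L}. length (lanes s i) \<le> W \<and> set (lanes s i) \<subseteq> {1..C}) \<and>
     set (upstream s) \<subseteq> {1..C} \<and> prev s \<le> C"

definition step :: "nat \<Rightarrow> nat \<Rightarrow> pstate \<Rightarrow> nat \<Rightarrow> int \<times> pstate" where
  "step L W s a =
    (if 1 \<le> a \<and> a \<le> L then
       (case lanes s a of
          [] \<Rightarrow> (-10, s)
        | c # rest \<Rightarrow> ((if c = prev s then 1 else 0),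
                       s\<lparr>lanes := (lanes s)(a := rest), prev := c\<rparr>))
     else if L < a \<and> a \<le> 2 * L then
       (let i = a - L in
        case upstream s of
          [] \<Rightarrow> (-10, s)
        | c # rest \<Rightarrow> (if W \<le> length (lanes s i) then (-10, s)
                       else (0, s\<lparr>lanes := (lanes s)(i := lanes s i @ [c]), upstream := rest\<rparr>)))
     else (-10, s))"

fun cum_reward :: "nat \<Rightarrow> nat \<Rightarrow> pstate \<Rightarrow> nat list \<Rightarrow> int" where
  "cum_reward L W s [] = 0"
| "cum_reward L W s (a # as) =
     fst (step L W s a) + cum_reward L W (snd (step L W s a)) as"

text \<open>a is optimal in s: for every action a' and continuation a'_1..a'_n, some
  continuation after a achieves at least the same cumulative reward
  (i.e. the max over continuations after a dominates).\<close>
definition optimal_action :: "nat \<Rightarrow> nat \<Rightarrow> pstate \<Rightarrow> nat \<Rightarrow> bool" where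
  "optimal_action L W s a \<longleftrightarrow>
     (\<forall>a' as'. a' \<in> {1..2*L} \<and> set as' \<subseteq> {1..2*L} \<longrightarrow>
        (\<exists>as. set as \<subseteq> {1..2*L} \<and>
              cum_reward L W s (a' # as') \<le> cum_reward L W s (a # as)))"

end

theory Submission
  imports Defs
begin

lemma step_inv_or:
  "step L W s a = (-10, s) \<or>
   (\<exists>y r. 1 \<le> a \<and> a \<le> L \<and> lanes s a = y # r \<and>
      step L W s a = ((if y = prev s then 1 else 0), s\<lparr>lanes := (lanes s)(a := r), prev := y\<rparr>)) \<or>
   (\<exists>d r. L < a \<and> a \<le> 2*L \<and> upstream s = d # r \<and> length (lanes s (a-L)) < W \<and>
      step L W s a = (0, s\<lparr>lanes := (lanes s)(a-L := lanes s (a-L) @ [d]), upstream := r\<rparr>))"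
  unfolding step_def Let_def
  by (auto split: list.splits)

lemma step_retr:
  "1 \<le> a \<Longrightarrow> a \<le> L \<Longrightarrow> lanes s a = y # r \<Longrightarrow>
   step L W s a = ((if y = prev s then 1 else 0), s\<lparr>lanes := (lanes s)(a := r), prev := y\<rparr>)"
  unfolding step_def by auto

lemma step_store:
  "L < a \<Longrightarrow> a \<le> 2*L \<Longrightarrow> upstream s = d # r \<Longrightarrow> length (lanes s (a-L)) < W \<Longrightarrow>
   step L W s a = (0, s\<lparr>lanes := (lanes s)(a-L := lanes s (a-L) @ [d]), upstream := r\<rparr>)"
  unfolding step_def Let_def by auto

definition relA :: "nat \<Rightarrow> pstate \<Rightarrow> pstate \<Rightarrow> bool" where
  "relA c t u \<longleftrightarrow> lanes t = lanes u \<and> upstream t = c # upstream u \<and> prev t = prev u"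
definition relB :: "nat \<Rightarrow> nat \<Rightarrow> pstate \<Rightarrow> pstate \<Rightarrow> bool" where
  "relB c L t u \<longleftrightarrow> (\<exists>k xs ys. 1 \<le> k \<and> k \<le> L \<and> lanes u k = xs @ ys \<and>
      lanes t = (lanes u)(k := xs @ c # ys) \<and> upstream t = upstream u \<and> prev t = prev u)"
definition relC :: "pstate \<Rightarrow> pstate \<Rightarrow> bool" where
  "relC t u \<longleftrightarrow> lanes t = lanes u \<and> upstream t = upstream u"

lemma mainsim:
  "\<forall>t u. (relC t u \<longrightarrow> (\<exists>\<tau>. set \<tau> \<subseteq> set \<sigma> \<and>
             cum_reward L W t \<sigma> \<le> (if prev t = prev u then 0 else 1) + cum_reward L W u \<tau>))
        \<and> (relA c t u \<longrightarrow> (\<exists>\<tau>. set \<tau> \<subseteq> set \<sigma> \<and> cum_reward L W t \<sigma> \<le> 1 + cum_reward L W u \<tau>))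
        \<and> (relB c L t u \<longrightarrow> (\<exists>\<tau>. set \<tau> \<subseteq> set \<sigma> \<and> cum_reward L W t \<sigma> \<le> 1 + cum_reward L W u \<tau>))"
proof (induction \<sigma>)
  case Nil
  then show ?case by auto
next
  case (Cons a \<sigma>)
  show ?case
  proof (intro allI conjI impI)
    fix t u
    assume rc: "relC t u"
    from step_inv_or[of L W t a] show "\<exists>\<tau>. set \<tau> \<subseteq> set (a # \<sigma>) \<and>
             cum_reward L W t (a # \<sigma>) \<le> (if prev t = prev u then 0 else 1) + cum_reward L W u \<tau>"
    proof (elim disjE exE conjE)
      assume "step L W t a = (-10, t)"
      moreover obtain \<tau> where "set \<tau> \<subseteq> set \<sigma>"
        "cum_reward L W t \<sigma> \<le> (if prev t = prev u then 0 else 1) + cum_reward L W u \<tau>"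
        using Cons.IH rc by blast
      ultimately show ?thesis by (intro exI[of _ \<tau>]) auto
    next
      fix y r assume h: "1 \<le> a" "a \<le> L" "lanes t a = y # r"
        "step L W t a = ((if y = prev t then 1 else 0), t\<lparr>lanes := (lanes t)(a := r), prev := y\<rparr>)"
      have su: "step L W u a = ((if y = prev u then 1 else 0), u\<lparr>lanes := (lanes u)(a := r), prev := y\<rparr>)"
        using h rc by (intro step_retr) (auto simp: relC_def)
      have "relC (t\<lparr>lanes := (lanes t)(a := r), prev := y\<rparr>) (u\<lparr>lanes := (lanes u)(a := r), prev := y\<rparr>)"
        using rc by (auto simp: relC_def)
      then obtain \<tau> where "set \<tau> \<subseteq> set \<sigma>"
        "cum_reward L W (t\<lparr>lanes := (lanes t)(a := r), prev := y\<rparr>) \<sigma> \<le> 0 + cum_reward L W (u\<lparr>lanes := (lanes u)(a := r), prev := y\<rparr>) \<tau>"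
        using Cons.IH by fastforce
      then show ?thesis using h su by (intro exI[of _ "a # \<tau>"]) auto
    next
      fix d r assume h: "L < a" "a \<le> 2*L" "upstream t = d # r" "length (lanes t (a-L)) < W"
        "step L W t a = (0, t\<lparr>lanes := (lanes t)(a-L := lanes t (a-L) @ [d]), upstream := r\<rparr>)"
      have su: "step L W u a = (0, u\<lparr>lanes := (lanes u)(a-L := lanes u (a-L) @ [d]), upstream := r\<rparr>)"
        using h rc by (intro step_store) (auto simp: relC_def)
      have "relC (t\<lparr>lanes := (lanes t)(a-L := lanes t (a-L) @ [d]), upstream := r\<rparr>) (u\<lparr>lanes := (lanes u)(a-L := lanes u (a-L) @ [d]), upstream := r\<rparr>)"
        using rc by (auto simp: relC_def)
      then obtain \<tau> where "set \<tau> \<subseteq> set \<sigma>"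
        "cum_reward L W (t\<lparr>lanes := (lanes t)(a-L := lanes t (a-L) @ [d]), upstream := r\<rparr>) \<sigma> \<le> (if prev t = prev u then 0 else 1) + cum_reward L W (u\<lparr>lanes := (lanes u)(a-L := lanes u (a-L) @ [d]), upstream := r\<rparr>) \<tau>"
        using Cons.IH by fastforce
      then show ?thesis using h su by (intro exI[of _ "a # \<tau>"]) auto
    qed
  next
    fix t u
    assume ra: "relA c t u"
    from step_inv_or[of L W t a] show "\<exists>\<tau>. set \<tau> \<subseteq> set (a # \<sigma>) \<and>
             cum_reward L W t (a # \<sigma>) \<le> 1 + cum_reward L W u \<tau>"
    proof (elim disjE exE conjE)
      assume "step L W t a = (-10, t)"
      moreover obtain \<tau> where "set \<tau> \<subseteq> set \<sigma>"
        "cum_reward L W t \<sigma> \<le> 1 + cum_reward L W u \<tau>"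
        using Cons.IH ra by blast
      ultimately show ?thesis by (intro exI[of _ \<tau>]) auto
    next
      fix y r assume h: "1 \<le> a" "a \<le> L" "lanes t a = y # r"
        "step L W t a = ((if y = prev t then 1 else 0), t\<lparr>lanes := (lanes t)(a := r), prev := y\<rparr>)"
      have su: "step L W u a = ((if y = prev u then 1 else 0), u\<lparr>lanes := (lanes u)(a := r), prev := y\<rparr>)"
        using h ra by (intro step_retr) (auto simp: relA_def)
      have "relA c (t\<lparr>lanes := (lanes t)(a := r), prev := y\<rparr>) (u\<lparr>lanes := (lanes u)(a := r), prev := y\<rparr>)"
        using ra by (auto simp: relA_def)
      then obtain \<tau> where "set \<tau> \<subseteq> set \<sigma>"
        "cum_reward L W (t\<lparr>lanes := (lanes t)(a := r), prev := y\<rparr>) \<sigma> \<le> 1 + cum_reward L W (u\<lparr>lanes := (lanes u)(a := r), prev := y\<rparr>) \<tau>"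
        using Cons.IH by fastforce
      then show ?thesis using h su ra by (intro exI[of _ "a # \<tau>"]) (auto simp: relA_def)
    next
      fix d r assume h: "L < a" "a \<le> 2*L" "upstream t = d # r" "length (lanes t (a-L)) < W"
        "step L W t a = (0, t\<lparr>lanes := (lanes t)(a-L := lanes t (a-L) @ [d]), upstream := r\<rparr>)"
      have "relB c L (t\<lparr>lanes := (lanes t)(a-L := lanes t (a-L) @ [d]), upstream := r\<rparr>) u"
        using ra h unfolding relB_def relA_def
        by (intro exI[of _ "a-L"] exI[of _ "lanes u (a-L)"] exI[of _ "[]"]) auto
      then obtain \<tau> where "set \<tau> \<subseteq> set \<sigma>"
        "cum_reward L W (t\<lparr>lanes := (lanes t)(a-L := lanes t (a-L) @ [d]), upstream := r\<rparr>) \<sigma> \<le> 1 + cum_reward L W u \<tau>"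
        using Cons.IH by fastforce
      then show ?thesis using h by (intro exI[of _ \<tau>]) auto
    qed
  next
    fix t u
    assume rb: "relB c L t u"
    then obtain k xs ys where kb: "1 \<le> k" "k \<le> L" and ku: "lanes u k = xs @ ys"
      and lt: "lanes t = (lanes u)(k := xs @ c # ys)" and ut: "upstream t = upstream u"
      and pt: "prev t = prev u"
      unfolding relB_def by blast
    from step_inv_or[of L W t a] show "\<exists>\<tau>. set \<tau> \<subseteq> set (a # \<sigma>) \<and>
             cum_reward L W t (a # \<sigma>) \<le> 1 + cum_reward L W u \<tau>"
    proof (elim disjE exE conjE)
      assume "step L W t a = (-10, t)"
      moreover obtain \<tau> where "set \<tau> \<subseteq> set \<sigma>"
        "cum_reward L W t \<sigma> \<le> 1 + cum_reward L W u \<tau>"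
        using Cons.IH rb by blast
      ultimately show ?thesis by (intro exI[of _ \<tau>]) auto
    next
      fix y r assume h: "1 \<le> a" "a \<le> L" "lanes t a = y # r"
        "step L W t a = ((if y = prev t then 1 else 0), t\<lparr>lanes := (lanes t)(a := r), prev := y\<rparr>)"
      show ?thesis
      proof (cases "a = k")
        case False
        have su: "step L W u a = ((if y = prev u then 1 else 0), u\<lparr>lanes := (lanes u)(a := r), prev := y\<rparr>)"
          using h False lt by (intro step_retr) auto
        have "relB c L (t\<lparr>lanes := (lanes t)(a := r), prev := y\<rparr>) (u\<lparr>lanes := (lanes u)(a := r), prev := y\<rparr>)"
          unfolding relB_def using kb ku lt ut False
          by (intro exI[of _ k] exI[of _ xs] exI[of _ ys]) (auto simp: fun_upd_twist)
        then obtain \<tau> where "set \<tau> \<subseteq> set \<sigma>"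
          "cum_reward L W (t\<lparr>lanes := (lanes t)(a := r), prev := y\<rparr>) \<sigma> \<le> 1 + cum_reward L W (u\<lparr>lanes := (lanes u)(a := r), prev := y\<rparr>) \<tau>"
          using Cons.IH by fastforce
        then show ?thesis using h su pt by (intro exI[of _ "a # \<tau>"]) auto
      next
        case True
        show ?thesis
        proof (cases xs)
          case Nil
          then have yc: "y = c" "r = ys" using h True lt by auto
          have "relC (t\<lparr>lanes := (lanes t)(a := r), prev := y\<rparr>) u"
            using lt ut ku Nil yc True unfolding relC_def by auto
          then obtain \<tau> where "set \<tau> \<subseteq> set \<sigma>"
            "cum_reward L W (t\<lparr>lanes := (lanes t)(a := r), prev := y\<rparr>) \<sigma> \<le> (if y = prev u then 0 else 1) + cum_reward L W u \<tau>"
            using Cons.IH by fastforce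
          then show ?thesis using h pt by (intro exI[of _ \<tau>]) (auto split: if_splits)
        next
          case (Cons x xs')
          then have yc: "y = x" "r = xs' @ c # ys" using h True lt by auto
          have su: "step L W u a = ((if y = prev u then 1 else 0), u\<lparr>lanes := (lanes u)(a := xs' @ ys), prev := y\<rparr>)"
            using h True ku Cons yc by (intro step_retr) auto
          have "relB c L (t\<lparr>lanes := (lanes t)(a := r), prev := y\<rparr>) (u\<lparr>lanes := (lanes u)(a := xs' @ ys), prev := y\<rparr>)"
            unfolding relB_def using kb ku lt ut True yc
            by (intro exI[of _ k] exI[of _ xs'] exI[of _ ys]) auto
          then obtain \<tau> where "set \<tau> \<subseteq> set \<sigma>"
            "cum_reward L W (t\<lparr>lanes := (lanes t)(a := r), prev := y\<rparr>) \<sigma> \<le> 1 + cum_reward L W (u\<lparr>lanes := (lanes u)(a := xs' @ ys), prev := y\<rparr>) \<tau>"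
            using Cons.IH by fastforce
          then show ?thesis using h su pt by (intro exI[of _ "a # \<tau>"]) auto
        qed
      qed
    next
      fix d r assume h: "L < a" "a \<le> 2*L" "upstream t = d # r" "length (lanes t (a-L)) < W"
        "step L W t a = (0, t\<lparr>lanes := (lanes t)(a-L := lanes t (a-L) @ [d]), upstream := r\<rparr>)"
      have len: "length (lanes u (a-L)) < W"
        using h(4) lt ku by (cases "a - L = k") auto
      have su: "step L W u a = (0, u\<lparr>lanes := (lanes u)(a-L := lanes u (a-L) @ [d]), upstream := r\<rparr>)"
        using h ut len by (intro step_store) auto
      have "relB c L (t\<lparr>lanes := (lanes t)(a-L := lanes t (a-L) @ [d]), upstream := r\<rparr>) (u\<lparr>lanes := (lanes u)(a-L := lanes u (a-L) @ [d]), upstream := r\<rparr>)"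
      proof (cases "a - L = k")
        case True
        then show ?thesis unfolding relB_def using kb ku lt pt
          by (intro exI[of _ k] exI[of _ xs] exI[of _ "ys @ [d]"]) auto
      next
        case False
        then show ?thesis unfolding relB_def using kb ku lt pt
          by (intro exI[of _ k] exI[of _ xs] exI[of _ ys]) (auto simp: fun_upd_twist)
      qed
      then obtain \<tau> where "set \<tau> \<subseteq> set \<sigma>"
        "cum_reward L W (t\<lparr>lanes := (lanes t)(a-L := lanes t (a-L) @ [d]), upstream := r\<rparr>) \<sigma> \<le> 1 + cum_reward L W (u\<lparr>lanes := (lanes u)(a-L := lanes u (a-L) @ [d]), upstream := r\<rparr>) \<tau>"
        using Cons.IH by fastforce
      then show ?thesis using h su by (intro exI[of _ "a # \<tau>"]) auto
    qed
  qed
qed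

theorem corollary1:
  fixes L W C i :: nat and s :: pstate
  assumes "wf_state L W C s"
    and "prev s \<noteq> 0"
    and "next_up s = prev s"
    and "i \<in> {1..L}"
    and "\<forall>j\<in>{1..W}. buf W s i j = 0"
  shows "optimal_action L W s (L + i)"
proof -
  have W1: "1 \<le> W" and lw: "set (lanes s i) \<subseteq> {1..C}" using assms(1,4) by (auto simp: wf_state_def)
  have empty: "lanes s i = []"
  proof (rule ccontr)
    assume "lanes s i \<noteq> []"
    then obtain x xs where "lanes s i = x # xs" by (cases "lanes s i") auto
    moreover have "buf W s i W = 0" using assms(5) W1 by auto
    ultimately have "x = 0" unfolding buf_def using W1 by auto
    with lw \<open>lanes s i = x # xs\<close> show False by auto
  qed
  obtain rest where up: "upstream s = prev s # rest"
    using assms(2,3) unfolding next_up_def by (cases "upstream s") auto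
  define s1 where "s1 = s\<lparr>lanes := (lanes s)(i := lanes s i @ [prev s]), upstream := rest\<rparr>"
  define s2 where "s2 = s1\<lparr>lanes := (lanes s1)(i := []), prev := prev s\<rparr>"
  have st1: "step L W s (L + i) = (0, s1)"
    unfolding s1_def using step_store[of L "L+i" s "prev s" rest W] assms(4) up empty W1 by auto
  have st2: "step L W s1 i = (1, s2)"
    unfolding s2_def using step_retr[of i L s1 "prev s" "[]" W] assms(4) empty
    by (auto simp: s1_def)
  have rA: "relA (prev s) s s2"
    unfolding relA_def s2_def s1_def using up empty by auto
  show ?thesis unfolding optimal_action_def
  proof (intro allI impI)
    fix a' as' assume h: "a' \<in> {1..2*L} \<and> set as' \<subseteq> {1..2*L}"
    obtain \<tau> where "set \<tau> \<subseteq> set (a' # as')" "cum_reward L W s (a' # as') \<le> 1 + cum_reward L W s2 \<tau>"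
      using mainsim[of "a' # as'" L W "prev s"] rA by blast
    then show "\<exists>as. set as \<subseteq> {1..2*L} \<and> cum_reward L W s (a' # as') \<le> cum_reward L W s ((L + i) # as)"
      using h st1 st2 assms(4) by (intro exI[of _ "i # \<tau>"]) auto
  qed
qed

end
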